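(* Let $q\ge 3$ and $\beta=0$. Let $\Omega=(G,\Lambda,\sigma)$ with $G=(V,E)$ be a feasible instance of the Potts model, let $v\in V\setminus\Lambda$, $B=B_\Omega(v)$, and let $\pi\in[q]^{B}$ be locally feasible. Then $\pi$ is feasible, i.e., there exists $\rho\in[q]^V$ with $w_\Omega(\rho)>0$ agreeing with $\pi$ on $B$.
   Context: Potts model: fix an integer $q\ge2$ and a real $\beta\ge0$; $[q]=\{1,\dots,q\}$, $0^0=1$. For a finite graph $G=(V,E)$ an instance is $\Omega=(G,\Lambda,\sigma)$, $\Lambda\subseteq V$, $\sigma\in[q]^\Lambda$; $w_\Omega(\pi)=\beta^{|\{uv\in E:\pi(u)=\pi(v)\}|}$ if $\pi\in[q]^V$ agrees with $\sigma$ on $\Lambda$, else $0$; $\Omega$ is feasible if some $\pi$ has $w_\Omega(\pi)>0$. For $S\subseteq V$ and $\rho\in[q]^S$, $w_{G[S]}(\rho)=\beta^{|\{uv\in E: u,v\in S,\rho(u)=\rho(v)\}|}$. For $S\subseteq V\setminus\Lambda$, $\pi\in[q]^S$ is locally feasible if $w_{G[\Lambda\cup S]}(\sigma\cup\pi)>0$, where $\sigma\cup\pi$ is the configuration on $\Lambda\cup S$ agreeing with $\sigma$ and $\pi$. A vertex is low-degree if $\deg_G(v)<\frac{q-1}{1-\beta}-2$ (for $\beta=0$: $\deg_G(v)<q-3$). $\partial B=\{u\in V\setminus B:\exists w\in B,uw\in E\}$. $B\subseteq V\setminus\Lambda$ is a permissive block in $\Omega$ if every $u\in\partial B\setminus\Lambda$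 is low-degree; $B_\Omega(S)$ is the minimal permissive block containing $S$. *)

theory Defs
  imports Complex_Main
begin

definition simple_graph :: "'a set \<Rightarrow> 'a set set \<Rightarrow> bool" where
  "simple_graph V E \<longleftrightarrow> finite V \<and>
     (\<forall>e\<in>E. \<exists>u v. u \<noteq> v \<and> u \<in> V \<and> v \<in> V \<and> e = {u, v})"

text \<open>rho is a configuration in [q]^S (only its values on S matter).\<close>
definition config :: "nat \<Rightarrow> 'a set \<Rightarrow> ('a \<Rightarrow> nat) \<Rightarrow> bool" where
  "config q S \<rho> \<longleftrightarrow> (\<forall>x\<in>S. \<rho> x \<in> {1..q})"

definition mono_edges :: "'a set set \<Rightarrow> 'a set \<Rightarrow> ('a \<Rightarrow> nat) \<Rightarrow> 'a set set" where
  "mono_edges E S \<rho> = {e \<in> E. e \<subseteq> S \<and> (\<forall>u\<in>e. \<forall>v\<in>e. \<rho> u = \<rho> v)}"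

text \<open>w_{G[S]}(rho) = beta ^ (#monochromatic edges in G[S]); note 0^0 = 1.\<close>
definition w_induced :: "real \<Rightarrow> 'a set set \<Rightarrow> 'a set \<Rightarrow> ('a \<Rightarrow> nat) \<Rightarrow> real" where
  "w_induced \<beta> E S \<rho> = \<beta> ^ card (mono_edges E S \<rho>)"

definition w_inst :: "real \<Rightarrow> nat \<Rightarrow> 'a set \<Rightarrow> 'a set set \<Rightarrow> 'a set \<Rightarrow> ('a \<Rightarrow> nat)
    \<Rightarrow> ('a \<Rightarrow> nat) \<Rightarrow> real" where
  "w_inst \<beta> q V E \<Lambda> \<sigma> \<pi> =
     (if config q V \<pi> \<and> (\<forall>x\<in>\<Lambda>. \<pi> x = \<sigma> x) then \<beta> ^ card (mono_edges E V \<pi>) else 0)"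

definition feasible_inst :: "real \<Rightarrow> nat \<Rightarrow> 'a set \<Rightarrow> 'a set set \<Rightarrow> 'a set \<Rightarrow> ('a \<Rightarrow> nat) \<Rightarrow> bool" where
  "feasible_inst \<beta> q V E \<Lambda> \<sigma> \<longleftrightarrow> (\<exists>\<pi>. w_inst \<beta> q V E \<Lambda> \<sigma> \<pi> > 0)"

definition glue :: "'a set \<Rightarrow> ('a \<Rightarrow> nat) \<Rightarrow> ('a \<Rightarrow> nat) \<Rightarrow> 'a \<Rightarrow> nat" where
  "glue \<Lambda> \<sigma> \<pi> = (\<lambda>x. if x \<in> \<Lambda> then \<sigma> x else \<pi> x)"

definition locally_feasible :: "real \<Rightarrow> 'a set set \<Rightarrow> 'a set \<Rightarrow> ('a \<Rightarrow> nat) \<Rightarrow> 'a set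
    \<Rightarrow> ('a \<Rightarrow> nat) \<Rightarrow> bool" where
  "locally_feasible \<beta> E \<Lambda> \<sigma> S \<pi> \<longleftrightarrow> w_induced \<beta> E (\<Lambda> \<union> S) (glue \<Lambda> \<sigma> \<pi>) > 0"

definition degree :: "'a set set \<Rightarrow> 'a \<Rightarrow> nat" where
  "degree E v = card {e \<in> E. v \<in> e}"

definition low_degree :: "real \<Rightarrow> nat \<Rightarrow> 'a set set \<Rightarrow> 'a \<Rightarrow> bool" where
  "low_degree \<beta> q E v \<longleftrightarrow> real (degree E v) < (real q - 1) / (1 - \<beta>) - 2"

definition boundary :: "'a set \<Rightarrow> 'a set set \<Rightarrow> 'a set \<Rightarrow> 'a set" where
  "boundary V E B = {u \<in> V - B. \<exists>w\<in>B. {u, w} \<in> E}"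

definition permissive :: "real \<Rightarrow> nat \<Rightarrow> 'a set \<Rightarrow> 'a set set \<Rightarrow> 'a set \<Rightarrow> 'a set \<Rightarrow> bool" where
  "permissive \<beta> q V E \<Lambda> B \<longleftrightarrow> B \<subseteq> V - \<Lambda> \<and>
     (\<forall>u \<in> boundary V E B - \<Lambda>. low_degree \<beta> q E u)"

text \<open>Minimal permissive block containing S (permissive blocks are closed under
  intersection, so this is the intersection of all of them containing S).\<close>
definition block :: "real \<Rightarrow> nat \<Rightarrow> 'a set \<Rightarrow> 'a set set \<Rightarrow> 'a set \<Rightarrow> 'a set \<Rightarrow> 'a set" where
  "block \<beta> q V E \<Lambda> S = \<Inter> {B. permissive \<beta> q V E \<Lambda> B \<and> S \<subseteq> B}"

end

theory Submission
  imports Defs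
begin

lemma free_color:
  fixes \<rho>0 :: "'a \<Rightarrow> nat"
  assumes "finite E" "degree E u < q"
  shows "\<exists>c\<in>{1..q}. \<forall>w. {u,w} \<in> E \<longrightarrow> \<rho>0 w \<noteq> c"
proof -
  let ?N = "{w. {u,w} \<in> E}"
  have inj: "inj_on (\<lambda>w. {u,w}) ?N" by (auto simp: inj_on_def doubleton_eq_iff)
  have sub: "(\<lambda>w. {u,w}) ` ?N \<subseteq> {e\<in>E. u\<in>e}" by auto
  have fin: "finite {e\<in>E. u\<in>e}" using assms(1) by auto
  have "card ?N = card ((\<lambda>w. {u,w}) ` ?N)" using inj by (simp add: card_image)
  also have "\<dots> \<le> degree E u" unfolding degree_def using card_mono[OF fin sub] .
  finally have cN: "card ?N < q" using assms(2) by simp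
  have finN: "finite ?N" using finite_imageD[OF finite_subset[OF sub fin] inj] .
  have "card (\<rho>0 ` ?N) < q" using card_image_le[OF finN, of \<rho>0] cN by linarith
  hence "\<not> {1..q} \<subseteq> \<rho>0 ` ?N"
    using card_mono[OF finite_imageI[OF finN]] by fastforce
  then obtain c where c: "c \<in> {1..q}" "c \<notin> \<rho>0 ` ?N" by (meson subsetI)
  have "\<forall>w. {u,w} \<in> E \<longrightarrow> \<rho>0 w \<noteq> c"
  proof (intro allI impI)
    fix w assume "{u,w} \<in> E"
    then have "w \<in> ?N" by simp
    then have "\<rho>0 w \<in> \<rho>0 ` ?N" by (rule imageI)
    then show "\<rho>0 w \<noteq> c" using c(2) by auto
  qed
  then show ?thesis using c(1) by (intro bexI[of _ c])
qed

lemma greedy: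
  fixes \<rho>0 :: "'a \<Rightarrow> nat"
  assumes "finite U" "U \<subseteq> V" "finite E" "\<forall>e\<in>E. \<exists>a b. a\<noteq>b \<and> e={a,b}"
    "\<forall>u\<in>U. degree E u < q"
  shows "config q V \<rho>0 \<Longrightarrow> (\<forall>e\<in>E. e \<inter> U = {} \<longrightarrow> (\<exists>a\<in>e. \<exists>b\<in>e. \<rho>0 a \<noteq> \<rho>0 b)) \<Longrightarrow>
    \<exists>\<rho>. config q V \<rho> \<and> (\<forall>x. x \<notin> U \<longrightarrow> \<rho> x = \<rho>0 x) \<and> (\<forall>e\<in>E. \<exists>a\<in>e. \<exists>b\<in>e. \<rho> a \<noteq> \<rho> b)"
  using assms(1,2,5)
proof (induction U arbitrary: \<rho>0 rule: finite_induct)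
  case empty
  then show ?case by auto
next
  case (insert u U)
  have "degree E u < q" using insert.prems(4) by simp
  then have "\<exists>c\<in>{1..q}. \<forall>w. {u,w} \<in> E \<longrightarrow> \<rho>0 w \<noteq> c"
    by (rule free_color[OF assms(3)])
  then obtain c where c: "c \<in> {1..q}" "\<forall>w. {u,w} \<in> E \<longrightarrow> \<rho>0 w \<noteq> c" by blast
  define \<rho>1 where "\<rho>1 = \<rho>0(u := c)"
  have cf: "config q V \<rho>1" using insert.prems(1) c(1) unfolding config_def \<rho>1_def by auto
  have ed: "\<forall>e\<in>E. e \<inter> U = {} \<longrightarrow> (\<exists>a\<in>e. \<exists>b\<in>e. \<rho>1 a \<noteq> \<rho>1 b)"
  proof (intro ballI impI)
    fix e assume e: "e \<in> E" "e \<inter> U = {}"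
    show "\<exists>a\<in>e. \<exists>b\<in>e. \<rho>1 a \<noteq> \<rho>1 b"
    proof (cases "u \<in> e")
      case False
      then have "e \<inter> insert u U = {}" using e by auto
      then have "\<exists>a\<in>e. \<exists>b\<in>e. \<rho>0 a \<noteq> \<rho>0 b" using insert.prems(2) e(1) by blast
      moreover have "\<forall>a\<in>e. \<rho>1 a = \<rho>0 a" using False unfolding \<rho>1_def by auto
      ultimately show ?thesis by simp
    next
      case True
      obtain a b where ab: "a \<noteq> b" "e = {a,b}" using assms(4) e(1) by blast
      obtain w where w: "e = {u,w}" "w \<noteq> u"
      proof (cases "u = a")
        case True
        then show ?thesis using that ab by blast
      next
        case False
        then have "u = b" using \<open>u \<in> e\<close> ab by blast
        then show ?thesis using that ab by (metis insert_commute)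
      qed
      have "{u,w} \<in> E" using w(1) e(1) by simp
      then have "\<rho>0 w \<noteq> c" using c(2) by blast
      then have "\<rho>1 u \<noteq> \<rho>1 w" unfolding \<rho>1_def using w(2) by simp
      then show ?thesis using w by auto
    qed
  qed
  obtain \<rho> where r: "config q V \<rho>" "\<forall>x. x \<notin> U \<longrightarrow> \<rho> x = \<rho>1 x"
     "\<forall>e\<in>E. \<exists>a\<in>e. \<exists>b\<in>e. \<rho> a \<noteq> \<rho> b"
    using insert.IH[OF cf ed] insert.prems(3,4) by auto
  show ?case
    by (rule exI[of _ \<rho>]) (use r in \<open>auto simp: \<rho>1_def\<close>)
qed

theorem mainTheorem5:
  fixes V :: "'a set" and E :: "'a set set" and \<Lambda> :: "'a set"
    and \<sigma> \<pi> :: "'a \<Rightarrow> nat" and q :: nat and \<beta> :: real and v :: 'a and B :: "'a set"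
  assumes "q \<ge> 3" and "\<beta> = 0"
    and "simple_graph V E" and "\<Lambda> \<subseteq> V" and "config q \<Lambda> \<sigma>"
    and "feasible_inst \<beta> q V E \<Lambda> \<sigma>"
    and "v \<in> V - \<Lambda>"
    and "B = block \<beta> q V E \<Lambda> {v}"
    and "config q B \<pi>"
    and "locally_feasible \<beta> E \<Lambda> \<sigma> B \<pi>"
  shows "\<exists>\<rho>. w_inst \<beta> q V E \<Lambda> \<sigma> \<rho> > 0 \<and> (\<forall>x\<in>B. \<rho> x = \<pi> x)"
proof -
  have finV: "finite V" and edges: "\<forall>e\<in>E. \<exists>a b. a \<noteq> b \<and> a \<in> V \<and> b \<in> V \<and> e = {a,b}"
    using assms(3) unfolding simple_graph_def by blast+
  have EV: "E \<subseteq> Pow V" using edges by auto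
  have finE: "finite E" using finite_subset[OF EV] finV by auto
  let ?P = "{B. permissive \<beta> q V E \<Lambda> B \<and> {v} \<subseteq> B}"
  have VL: "V - \<Lambda> \<in> ?P" using assms(7) unfolding permissive_def boundary_def by auto
  have Bdef: "B = \<Inter> ?P" using assms(8) unfolding block_def by simp
  have BVL: "B \<subseteq> V - \<Lambda>" using Bdef VL by blast
  have Bbd: "\<forall>u\<in>boundary V E B - \<Lambda>. low_degree \<beta> q E u"
  proof
    fix u assume u: "u \<in> boundary V E B - \<Lambda>"
    then obtain w where w: "u \<in> V" "u \<notin> B" "w \<in> B" "{u,w} \<in> E" "u \<notin> \<Lambda>"
      unfolding boundary_def by auto
    then obtain B' where B': "B' \<in> ?P" "u \<notin> B'" using Bdef by blast
    have "w \<in> B'" using w(3) B' Bdef by blast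
    then have "u \<in> boundary V E B' - \<Lambda>" using w B' unfolding boundary_def by auto
    then show "low_degree \<beta> q E u" using B' unfolding permissive_def by blast
  qed
  obtain \<tau> where tau: "w_inst \<beta> q V E \<Lambda> \<sigma> \<tau> > 0" using assms(6) unfolding feasible_inst_def by blast
  have tcf: "config q V \<tau>" and tL: "\<forall>x\<in>\<Lambda>. \<tau> x = \<sigma> x"
    and tpos: "(0::real) ^ card (mono_edges E V \<tau>) > 0"
    using tau assms(2) unfolding w_inst_def by (auto split: if_splits)
  have "card (mono_edges E V \<tau>) = 0" using tpos by (cases "card (mono_edges E V \<tau>)") auto
  moreover have "finite (mono_edges E V \<tau>)" using finE unfolding mono_edges_def by auto
  ultimately have tmono: "mono_edges E V \<tau> = {}" by simp
  have lpos: "(0::real) ^ card (mono_edges E (\<Lambda> \<union> B) (glue \<Lambda> \<sigma> \<pi>)) > 0"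
    using assms(10,2) unfolding locally_feasible_def w_induced_def by simp
  have "card (mono_edges E (\<Lambda> \<union> B) (glue \<Lambda> \<sigma> \<pi>)) = 0"
    using lpos by (cases "card (mono_edges E (\<Lambda> \<union> B) (glue \<Lambda> \<sigma> \<pi>))") auto
  moreover have "finite (mono_edges E (\<Lambda> \<union> B) (glue \<Lambda> \<sigma> \<pi>))" using finE unfolding mono_edges_def by auto
  ultimately have lmono: "mono_edges E (\<Lambda> \<union> B) (glue \<Lambda> \<sigma> \<pi>) = {}" by simp
  define \<rho>0 where "\<rho>0 = (\<lambda>x. if x \<in> \<Lambda> then \<sigma> x else if x \<in> B then \<pi> x else \<tau> x)"
  define U where "U = boundary V E B - \<Lambda>"
  have UV: "U \<subseteq> V" unfolding U_def boundary_def by auto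
  have finU: "finite U" using finite_subset[OF UV finV] .
  have Udeg: "\<forall>u\<in>U. degree E u < q"
  proof
    fix u assume "u \<in> U"
    then have "low_degree \<beta> q E u" using Bbd U_def by blast
    then have "real (degree E u) < real q - 3" using assms(2) unfolding low_degree_def by simp
    then show "degree E u < q" by linarith
  qed
  have cf0: "config q V \<rho>0" using assms(5,9) tcf unfolding config_def \<rho>0_def by auto
  have ed0: "\<forall>e\<in>E. e \<inter> U = {} \<longrightarrow> (\<exists>a\<in>e. \<exists>b\<in>e. \<rho>0 a \<noteq> \<rho>0 b)"
  proof (intro ballI impI)
    fix e assume e: "e \<in> E" "e \<inter> U = {}"
    obtain a b where ab: "a \<noteq> b" "a \<in> V" "b \<in> V" "e = {a,b}" using edges e(1) by blast
    show "\<exists>a\<in>e. \<exists>b\<in>e. \<rho>0 a \<noteq> \<rho>0 b"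
    proof (cases "e \<subseteq> \<Lambda> \<union> B")
      case True
      then have "e \<notin> mono_edges E (\<Lambda> \<union> B) (glue \<Lambda> \<sigma> \<pi>)" using lmono by auto
      then obtain x y where "x \<in> e" "y \<in> e" "glue \<Lambda> \<sigma> \<pi> x \<noteq> glue \<Lambda> \<sigma> \<pi> y"
        using True e(1) unfolding mono_edges_def by auto
      moreover have "\<forall>z\<in>e. glue \<Lambda> \<sigma> \<pi> z = \<rho>0 z" using True unfolding glue_def \<rho>0_def by auto
      ultimately show ?thesis by metis
    next
      case False
      have nb: "a \<notin> B \<and> b \<notin> B"
      proof (rule ccontr)
        assume "\<not> (a \<notin> B \<and> b \<notin> B)"
        then have "(a \<in> B \<and> b \<notin> \<Lambda> \<union> B) \<or> (b \<in> B \<and> a \<notin> \<Lambda> \<union> B)" using False ab by auto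
        then show False
        proof
          assume h: "a \<in> B \<and> b \<notin> \<Lambda> \<union> B"
          have "{b,a} \<in> E" using e ab by (simp add: insert_commute)
          then have "b \<in> U" using h ab unfolding U_def boundary_def by auto
          then show False using e ab by auto
        next
          assume h: "b \<in> B \<and> a \<notin> \<Lambda> \<union> B"
          then have "a \<in> U" using ab e unfolding U_def boundary_def by auto
          then show False using e ab by auto
        qed
      qed
      have "e \<notin> mono_edges E V \<tau>" using tmono by auto
      then obtain x y where "x \<in> e" "y \<in> e" "\<tau> x \<noteq> \<tau> y"
        using e(1) ab unfolding mono_edges_def by auto
      moreover have "\<forall>z\<in>e. \<tau> z = \<rho>0 z" using nb ab tL unfolding \<rho>0_def by auto
      ultimately show ?thesis by metis
    qed
  qed
  have edges': "\<forall>e\<in>E. \<exists>a b. a\<noteq>b \<and> e={a,b}" using edges by blast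
  obtain \<rho> where r: "config q V \<rho>" "\<forall>x. x \<notin> U \<longrightarrow> \<rho> x = \<rho>0 x"
    "\<forall>e\<in>E. \<exists>a\<in>e. \<exists>b\<in>e. \<rho> a \<noteq> \<rho> b"
    using greedy[OF finU UV finE edges' Udeg cf0 ed0] by blast
  have rm: "mono_edges E V \<rho> = {}" using r(3) unfolding mono_edges_def by fastforce
  have UB: "U \<inter> (\<Lambda> \<union> B) = {}" unfolding U_def boundary_def by auto
  have rL: "\<forall>x\<in>\<Lambda>. \<rho> x = \<sigma> x" using r(2) UB unfolding \<rho>0_def by auto
  have rB: "\<forall>x\<in>B. \<rho> x = \<pi> x"
  proof
    fix x assume x: "x \<in> B"
    then have "x \<notin> U" "x \<notin> \<Lambda>" using UB BVL by auto
    then show "\<rho> x = \<pi> x" using r(2) x unfolding \<rho>0_def by auto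
  qed
  have "w_inst \<beta> q V E \<Lambda> \<sigma> \<rho> = 1" using r(1) rL rm unfolding w_inst_def by simp
  then show ?thesis using rB by (intro exI[of _ \<rho>]) simp
qed

end
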